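(* An abstract $b$-flip $f$ (a move $(t_1\cup t_2,b)\to(t'_1\cup t'_2,b')$ on a branched quadrilateral) is a sliding flip if and only if the following holds. For every $(S,V)$ and every application of $f$ to a branched ideal triangulation $(T,b)$ of $(S,V)$, producing $(T',b')$, one has $d_b(v)=d_{b'}(v)$ for every $v\in V$.
   Context: $(S,V)$ denotes a closed surface with a finite set of marked points, $\chi(S)-|V|<0$. Ideal triangulations have vertex set exactly $V$. A branching $b$ orients all edges so that on each abstract triangle the orientations are induced by a total order $v_0<v_1<v_2$ of its vertices, edges pointing to the larger endpoint. In such a branched triangle, the corner at the middle vertex $v_1$ (the corner formed by the two edges $v_0v_1,v_1v_2$ carrying the "prevalent" orientation) is called the $1$-labelled corner. For a vertex $v$, the number of $1$-labelled corners at $v$ is even, and is denoted $2d_b(v)$. An abstract $b$-flip acts on a quadrilateral $Q=t_1\cup t_2$ triangulated by two triangles sharing a diagonal $e$. It replaces them by the two triangles $t'_1,t'_2$ sharing the other diagonal $e'$, with an orientation of $e'$ making the result branched while the boundary edges of $Q$ keep their orientations. Such a $b$-flip is forced if it is the unique branched enhancement of the naked flip starting from $(t_1\cup t_2,b)$. It is a sliding flip ($s$-flip) if at least one of it and its inverse $b$-flip $(t'_1\cup t'_2,b')\to(t_1\cup t_2,b)$ is forced. *)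

theory Defs
  imports Complex_Main
begin

text \<open>
A branched triangle has its corners named by their branching
rank 0 < 1 < 2 (corner 1 is the 1-labelled, i.e. middle, corner).  Its sides are named
by their (ordered) pair of corners; side (a,b) with a < b is oriented from corner a to
corner b.  A branched ideal triangulation is a finite set F of triangle names, a gluing
gl of sides (fixed-point free involution), which in the branched setting must identify
source with source and target with target, and a labelling vert of corners by the
ideal vertices, which is exactly the quotient of corners by the gluing.
\<close>

definition Sides :: "(nat \<times> nat) set" where
  "Sides = {(0,1),(0,2),(1,2)}"

type_synonym ('a,'v) btri =
  "'a set \<times> ('a \<times> (nat \<times> nat) \<Rightarrow> 'a \<times> (nat \<times> nat)) \<times> ('a \<Rightarrow> nat \<Rightarrow> 'v)"

definition corner_adj :: "'a set \<Rightarrow> ('a \<times> (nat \<times> nat) \<Rightarrow> 'a \<times> (nat \<times> nat)) \<Rightarrow> (('a \<times> nat) \<times> ('a \<times> nat)) set" where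
  "corner_adj F gl = {((t,a),(t',a')) | t s t' s' a a'. t \<in> F \<and> s \<in> Sides \<and> gl (t,s) = (t',s') \<and>
      ((a = fst s \<and> a' = fst s') \<or> (a = snd s \<and> a' = snd s'))}"

definition dual_adj :: "'a set \<Rightarrow> ('a \<times> (nat \<times> nat) \<Rightarrow> 'a \<times> (nat \<times> nat)) \<Rightarrow> ('a \<times> 'a) set" where
  "dual_adj F gl = {(t,t') | t s t' s'. t \<in> F \<and> s \<in> Sides \<and> gl (t,s) = (t',s')}"

definition branched_triangulation :: "('a,'v) btri \<Rightarrow> bool" where
  "branched_triangulation T \<longleftrightarrow> (case T of (F, gl, vert) \<Rightarrow>
     finite F \<and> F \<noteq> {} \<and>
     (\<forall>t\<in>F. \<forall>s\<in>Sides. gl (t,s) \<in> F \<times> Sides \<and> gl (gl (t,s)) = (t,s) \<and> gl (t,s) \<noteq> (t,s)) \<and>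
     (\<forall>t\<in>F. \<forall>s\<in>Sides.
        vert t (fst s) = vert (fst (gl (t,s))) (fst (snd (gl (t,s)))) \<and>
        vert t (snd s) = vert (fst (gl (t,s))) (snd (snd (gl (t,s))))) \<and>
     (\<forall>t\<in>F. \<forall>t'\<in>F. \<forall>c<3. \<forall>c'<3. vert t c = vert t' c' \<longrightarrow>
        ((t,c),(t',c')) \<in> (corner_adj F gl)\<^sup>*) \<and>
     (\<forall>t\<in>F. \<forall>t'\<in>F. (t,t') \<in> (dual_adj F gl)\<^sup>*))"

definition tri_vertices :: "('a,'v) btri \<Rightarrow> 'v set" where
  "tri_vertices T = (case T of (F, gl, vert) \<Rightarrow> {vert t c | t c. t \<in> F \<and> c < 3})"

definition d_b :: "('a,'v) btri \<Rightarrow> 'v \<Rightarrow> real" where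
  "d_b T v = (case T of (F, gl, vert) \<Rightarrow> real (card {t \<in> F. vert t 1 = v}) / 2)"

text \<open>
The abstract quadrilateral has vertices 0,1,2,3 in cyclic order,
diagonal e = {0,2}, triangles t1 = {0,1,2}, t2 = {0,2,3}; after the flip the diagonal is
e' = {1,3} and the triangles are t1' = {0,1,3}, t2' = {1,2,3}.  A b-flip is encoded by
the orientations D of all six edges (D i j: edge oriented from i to j): the four boundary
edges and e carry b, the boundary edges and e' carry b'; both pairs of triangles must be
branched (acyclically oriented).
\<close>

definition tournament4 :: "(nat \<Rightarrow> nat \<Rightarrow> bool) \<Rightarrow> bool" where
  "tournament4 D \<longleftrightarrow> (\<forall>i<4. \<not> D i i) \<and> (\<forall>i<4. \<forall>j<4. i \<noteq> j \<longrightarrow> (D i j \<longleftrightarrow> \<not> D j i))"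

definition acyclic_tri :: "(nat \<Rightarrow> nat \<Rightarrow> bool) \<Rightarrow> nat \<Rightarrow> nat \<Rightarrow> nat \<Rightarrow> bool" where
  "acyclic_tri D a b c \<longleftrightarrow> \<not> (D a b \<and> D b c \<and> D c a) \<and> \<not> (D a c \<and> D c b \<and> D b a)"

definition Q1 :: "nat set" where "Q1 = {0,1,2}"
definition Q2 :: "nat set" where "Q2 = {0,2,3}"
definition Q1' :: "nat set" where "Q1' = {0,1,3}"
definition Q2' :: "nat set" where "Q2' = {1,2,3}"

definition bflip :: "(nat \<Rightarrow> nat \<Rightarrow> bool) \<Rightarrow> bool" where
  "bflip D \<longleftrightarrow> tournament4 D \<and> acyclic_tri D 0 1 2 \<and> acyclic_tri D 0 2 3 \<and>
     acyclic_tri D 0 1 3 \<and> acyclic_tri D 1 2 3"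

text \<open>Branched enhancements of the naked flip from (t1 \<union> t2, b): only the orientation
of e' = {1,3} may vary.  Of the inverse naked flip from (t1' \<union> t2', b'): only e = {0,2}.\<close>
definition enhancements :: "(nat \<Rightarrow> nat \<Rightarrow> bool) \<Rightarrow> (nat \<Rightarrow> nat \<Rightarrow> bool) set" where
  "enhancements D = {D'. bflip D' \<and> (\<forall>i j. {i,j} \<noteq> {1,3} \<longrightarrow> D' i j = D i j)}"

definition inv_enhancements :: "(nat \<Rightarrow> nat \<Rightarrow> bool) \<Rightarrow> (nat \<Rightarrow> nat \<Rightarrow> bool) set" where
  "inv_enhancements D = {D'. bflip D' \<and> (\<forall>i j. {i,j} \<noteq> {0,2} \<longrightarrow> D' i j = D i j)}"

definition forced :: "(nat \<Rightarrow> nat \<Rightarrow> bool) \<Rightarrow> bool" where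
  "forced D \<longleftrightarrow> card (enhancements D) = 1"

definition inv_forced :: "(nat \<Rightarrow> nat \<Rightarrow> bool) \<Rightarrow> bool" where
  "inv_forced D \<longleftrightarrow> card (inv_enhancements D) = 1"

definition sliding :: "(nat \<Rightarrow> nat \<Rightarrow> bool) \<Rightarrow> bool" where
  "sliding D \<longleftrightarrow> forced D \<or> inv_forced D"

text \<open>Branching rank (corner name) of quad vertex p in abstract triangle A.\<close>
definition rank :: "(nat \<Rightarrow> nat \<Rightarrow> bool) \<Rightarrow> nat set \<Rightarrow> nat \<Rightarrow> nat" where
  "rank D A p = card {q \<in> A. q \<noteq> p \<and> D q p}"

definition side_of :: "(nat \<Rightarrow> nat \<Rightarrow> bool) \<Rightarrow> nat set \<Rightarrow> nat \<Rightarrow> nat \<Rightarrow> nat \<times> nat" where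
  "side_of D A p q = (min (rank D A p) (rank D A q), max (rank D A p) (rank D A q))"

definition flip_applicable :: "(nat \<Rightarrow> nat \<Rightarrow> bool) \<Rightarrow> ('a,'v) btri \<Rightarrow> 'a \<Rightarrow> 'a \<Rightarrow> bool" where
  "flip_applicable D T x1 x2 \<longleftrightarrow> (case T of (F, gl, vert) \<Rightarrow>
     x1 \<in> F \<and> x2 \<in> F \<and> x1 \<noteq> x2 \<and> gl (x1, side_of D Q1 0 2) = (x2, side_of D Q2 0 2))"

definition BE :: "(nat \<times> nat) set" where
  "BE = {(0,1),(1,2),(2,3),(3,0)}"

definition old_bside :: "(nat \<Rightarrow> nat \<Rightarrow> bool) \<Rightarrow> 'a \<Rightarrow> 'a \<Rightarrow> nat \<times> nat \<Rightarrow> 'a \<times> (nat \<times> nat)" where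
  "old_bside D x1 x2 k = (if k \<in> {(0,1),(1,2)} then (x1, side_of D Q1 (fst k) (snd k))
                          else (x2, side_of D Q2 (fst k) (snd k)))"

definition new_bside :: "(nat \<Rightarrow> nat \<Rightarrow> bool) \<Rightarrow> 'a \<Rightarrow> 'a \<Rightarrow> nat \<times> nat \<Rightarrow> 'a \<times> (nat \<times> nat)" where
  "new_bside D x1 x2 k = (if k \<in> {(0,1),(3,0)} then (x1, side_of D Q1' (fst k) (snd k))
                          else (x2, side_of D Q2' (fst k) (snd k)))"

definition lift_side :: "(nat \<Rightarrow> nat \<Rightarrow> bool) \<Rightarrow> 'a \<Rightarrow> 'a \<Rightarrow> 'a \<times> (nat \<times> nat) \<Rightarrow> 'a \<times> (nat \<times> nat)" where
  "lift_side D x1 x2 \<tau> = (if \<exists>k\<in>BE. \<tau> = old_bside D x1 x2 k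
      then new_bside D x1 x2 (THE k. k \<in> BE \<and> \<tau> = old_bside D x1 x2 k) else \<tau>)"

definition flip_gl :: "(nat \<Rightarrow> nat \<Rightarrow> bool) \<Rightarrow> 'a \<Rightarrow> 'a \<Rightarrow> ('a \<times> (nat \<times> nat) \<Rightarrow> 'a \<times> (nat \<times> nat))
    \<Rightarrow> 'a \<times> (nat \<times> nat) \<Rightarrow> 'a \<times> (nat \<times> nat)" where
  "flip_gl D x1 x2 gl \<sigma> =
     (if \<sigma> = (x1, side_of D Q1' 1 3) then (x2, side_of D Q2' 1 3)
      else if \<sigma> = (x2, side_of D Q2' 1 3) then (x1, side_of D Q1' 1 3)
      else if \<exists>k\<in>BE. \<sigma> = new_bside D x1 x2 k
        then lift_side D x1 x2 (gl (old_bside D x1 x2 (THE k. k \<in> BE \<and> \<sigma> = new_bside D x1 x2 k)))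
      else lift_side D x1 x2 (gl \<sigma>))"

definition quad_vert :: "(nat \<Rightarrow> nat \<Rightarrow> bool) \<Rightarrow> 'a \<Rightarrow> 'a \<Rightarrow> ('a \<Rightarrow> nat \<Rightarrow> 'v) \<Rightarrow> nat \<Rightarrow> 'v" where
  "quad_vert D x1 x2 vert p = (if p \<in> Q1 then vert x1 (rank D Q1 p) else vert x2 (rank D Q2 p))"

definition flip_vert :: "(nat \<Rightarrow> nat \<Rightarrow> bool) \<Rightarrow> 'a \<Rightarrow> 'a \<Rightarrow> ('a \<Rightarrow> nat \<Rightarrow> 'v) \<Rightarrow> 'a \<Rightarrow> nat \<Rightarrow> 'v" where
  "flip_vert D x1 x2 vert t c =
     (if t = x1 then quad_vert D x1 x2 vert (THE p. p \<in> Q1' \<and> rank D Q1' p = c)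
      else if t = x2 then quad_vert D x1 x2 vert (THE p. p \<in> Q2' \<and> rank D Q2' p = c)
      else vert t c)"

text \<open>The result (T', b') of applying the flip D to (T, b) at x1, x2; the names x1, x2
are reused for t1', t2'.\<close>
definition apply_flip :: "(nat \<Rightarrow> nat \<Rightarrow> bool) \<Rightarrow> ('a,'v) btri \<Rightarrow> 'a \<Rightarrow> 'a \<Rightarrow> ('a,'v) btri" where
  "apply_flip D T x1 x2 = (case T of (F, gl, vert) \<Rightarrow>
     (F, flip_gl D x1 x2 gl, flip_vert D x1 x2 vert))"

end

theory Submission
  imports Defs
begin

lemma card_filter3:
  assumes "a \<noteq> b" "a \<noteq> c" "b \<noteq> c"
  shows "card {q \<in> {a,b,c}. P q} = of_bool (P a) + of_bool (P b) + of_bool (P c)"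
proof -
  have e: "{q \<in> {a,b,c}. P q} = (if P a then {a} else {}) \<union> (if P b then {b} else {}) \<union> (if P c then {c} else {})"
    by auto
  show ?thesis unfolding e using assms by (cases "P a"; cases "P b"; cases "P c"; simp)
qed

lemma rank_gen:
  assumes "a \<noteq> b" "a \<noteq> c" "b \<noteq> c"
  shows "rank D {a,b,c} p = of_bool (a \<noteq> p \<and> D a p) + of_bool (b \<noteq> p \<and> D b p) + of_bool (c \<noteq> p \<and> D c p)"
  unfolding rank_def using card_filter3[OF assms] by simp

lemma tourn:
  assumes "bflip D"
  shows "D 1 0 = (\<not> D 0 1)" "D 2 0 = (\<not> D 0 2)" "D 3 0 = (\<not> D 0 3)"
        "D 2 1 = (\<not> D 1 2)" "D 3 1 = (\<not> D 1 3)" "D 3 2 = (\<not> D 2 3)"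
        "\<not> D 0 0" "\<not> D 1 1" "\<not> D 2 2" "\<not> D 3 3"
proof -
  have t: "\<And>i j. i < 4 \<Longrightarrow> j < 4 \<Longrightarrow> i \<noteq> j \<Longrightarrow> D i j = (\<not> D j i)" "\<And>i. i < 4 \<Longrightarrow> \<not> D i i"
    using assms unfolding bflip_def tournament4_def by blast+
  show "D 1 0 = (\<not> D 0 1)" "D 2 0 = (\<not> D 0 2)" "D 3 0 = (\<not> D 0 3)"
        "D 2 1 = (\<not> D 1 2)" "D 3 1 = (\<not> D 1 3)" "D 3 2 = (\<not> D 2 3)"
        "\<not> D 0 0" "\<not> D 1 1" "\<not> D 2 2" "\<not> D 3 3"
    by (rule t; simp)+
qed
lemma acyc:
  assumes "bflip D"
  shows "acyclic_tri D 0 1 2" "acyclic_tri D 0 2 3" "acyclic_tri D 0 1 3" "acyclic_tri D 1 2 3"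
  using assms unfolding bflip_def by auto

definition NS :: "(nat \<Rightarrow> nat \<Rightarrow> bool) \<Rightarrow> bool" where
  "NS D \<longleftrightarrow> (D 0 1 \<and> D 0 3 \<and> D 2 1 \<and> D 2 3) \<or> (D 1 0 \<and> D 3 0 \<and> D 1 2 \<and> D 3 2)"

lemmas rk = rank_gen[of 0 1 2, simplified] rank_gen[of 0 2 3, simplified]
   rank_gen[of 0 1 3, simplified] rank_gen[of 1 2 3, simplified]
definition midf :: "(nat \<Rightarrow> nat \<Rightarrow> bool) \<Rightarrow> nat \<Rightarrow> nat \<Rightarrow> nat \<Rightarrow> nat" where
  "midf D a b c = (if D a b = D b c then b else if D b a = D a c then a else c)"

lemma mid_gen:
  assumes "a \<noteq> b" "a \<noteq> c" "b \<noteq> c" "D b a = (\<not> D a b)" "D c a = (\<not> D a c)" "D c b = (\<not> D b c)"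
    "acyclic_tri D a b c" "p \<in> {a,b,c}"
  shows "rank D {a,b,c} p = 1 \<longleftrightarrow> p = midf D a b c"
  using assms(4-) unfolding acyclic_tri_def midf_def
  by (cases "D a b"; cases "D a c"; cases "D b c"; auto simp: rank_gen[OF assms(1-3)] assms(1-3) assms(1-3)[symmetric])
lemma midf_in: "midf D a b c \<in> {a,b,c}" unfolding midf_def by auto

lemma the_mid:
  assumes "a \<noteq> b" "a \<noteq> c" "b \<noteq> c" "D b a = (\<not> D a b)" "D c a = (\<not> D a c)" "D c b = (\<not> D b c)"
    "acyclic_tri D a b c"
  shows "(THE p. p \<in> {a,b,c} \<and> rank D {a,b,c} p = 1) = midf D a b c"
  apply (rule the_equality)
  using mid_gen[OF assms] midf_in[of D a b c] by auto

lemma the_mids: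
  assumes "bflip D"
  shows "(THE p. p \<in> Q1 \<and> rank D Q1 p = 1) = midf D 0 1 2"
    "(THE p. p \<in> Q2 \<and> rank D Q2 p = 1) = midf D 0 2 3"
    "(THE p. p \<in> Q1' \<and> rank D Q1' p = 1) = midf D 0 1 3"
    "(THE p. p \<in> Q2' \<and> rank D Q2' p = 1) = midf D 1 2 3"
  unfolding Q1_def Q2_def Q1'_def Q2'_def
  using the_mid[of 0 1 2 D] the_mid[of 0 2 3 D] the_mid[of 0 1 3 D] the_mid[of 1 2 3 D]
    tourn[OF assms] acyc[OF assms] by simp_all

lemma rank_mids:
  assumes "bflip D"
  shows "rank D Q1 (midf D 0 1 2) = 1" "rank D Q2 (midf D 0 2 3) = 1"
   "midf D 0 1 2 \<in> Q1" "midf D 0 2 3 \<in> Q2"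
  unfolding Q1_def Q2_def
  using mid_gen[of 0 1 2 D "midf D 0 1 2"] mid_gen[of 0 2 3 D "midf D 0 2 3"]
    midf_in[of D 0 1 2] midf_in[of D 0 2 3]
    tourn[OF assms] acyc[OF assms] by simp_all

lemma ranks_Q1:
  assumes "bflip D"
  shows "rank D Q1 0 < 3 \<and> rank D Q1 2 < 3 \<and> (rank D Q1 0 < rank D Q1 2 \<longleftrightarrow> D 0 2) \<and> (rank D Q1 2 < rank D Q1 0 \<longleftrightarrow> \<not> D 0 2)
       \<and> rank D Q2 0 < 3 \<and> rank D Q2 2 < 3 \<and> (rank D Q2 0 < rank D Q2 2 \<longleftrightarrow> D 0 2) \<and> (rank D Q2 2 < rank D Q2 0 \<longleftrightarrow> \<not> D 0 2)"
  using acyc[OF assms] tourn[OF assms] unfolding Q1_def Q2_def acyclic_tri_def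
  by (cases "D 0 1"; cases "D 0 2"; cases "D 0 3"; cases "D 1 2"; cases "D 1 3"; cases "D 2 3"; simp add: rk)

lemma mids:
  assumes "bflip D" "\<not> NS D"
  shows "(midf D 0 1 3 = midf D 0 1 2 \<and> midf D 1 2 3 = midf D 0 2 3) \<or> (midf D 0 1 3 = midf D 0 2 3 \<and> midf D 1 2 3 = midf D 0 1 2)"
  using assms(2-) acyc[OF assms(1)] tourn[OF assms(1)] unfolding acyclic_tri_def NS_def midf_def
  by (cases "D 0 1"; cases "D 0 2"; cases "D 0 3"; cases "D 1 2"; cases "D 1 3"; cases "D 2 3"; simp)

lemma ns_facts:
  assumes "bflip D" "NS D"
  shows "rank D Q1 0 = rank D Q2 0" "rank D Q1 2 = rank D Q2 2"
    "(if midf D 0 1 3 \<in> Q1 then rank D Q1 (midf D 0 1 3) else rank D Q2 (midf D 0 1 3)) \<noteq> 1"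
    "(if midf D 1 2 3 \<in> Q1 then rank D Q1 (midf D 1 2 3) else rank D Q2 (midf D 1 2 3)) \<noteq> 1"
  using assms(2-) acyc[OF assms(1)] tourn[OF assms(1)] unfolding acyclic_tri_def NS_def midf_def Q1_def Q2_def
  by (cases "D 0 1"; cases "D 0 2"; cases "D 0 3"; cases "D 1 2"; cases "D 1 3"; cases "D 2 3"; simp add: rk)+

definition sw :: "nat \<Rightarrow> nat \<Rightarrow> (nat \<Rightarrow> nat \<Rightarrow> bool) \<Rightarrow> (nat \<Rightarrow> nat \<Rightarrow> bool)" where
  "sw a b D = (\<lambda>i j. if (i = a \<and> j = b) \<or> (i = b \<and> j = a) then \<not> D i j else D i j)"

lemma enh_gen:
  assumes "bflip D" "a \<noteq> b" "a < 4" "b < 4"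
    and E: "E = {D'. bflip D' \<and> (\<forall>i j. {i,j} \<noteq> {a,b} \<longrightarrow> D' i j = D i j)}"
  shows "card E = 1 \<longleftrightarrow> \<not> bflip (sw a b D)"
proof -
  have tD: "tournament4 D" using assms(1) unfolding bflip_def by simp
  have sub: "E \<subseteq> {D, sw a b D}"
  proof
    fix D' assume "D' \<in> E"
    hence b': "bflip D'" and ag: "\<And>i j. {i,j} \<noteq> {a,b} \<Longrightarrow> D' i j = D i j" using E by auto
    have t': "tournament4 D'" using b' unfolding bflip_def by simp
    have r1: "D' b a = (\<not> D' a b)" "D b a = (\<not> D a b)"
      using t' tD assms(2-4) unfolding tournament4_def by blast+
    show "D' \<in> {D, sw a b D}"
    proof (cases "D' a b = D a b")
      case True
      have "D' = D"
      proof (intro ext)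
        fix i j show "D' i j = D i j"
          using True r1 ag[of i j] by (cases "{i,j} = {a,b}") (auto simp: doubleton_eq_iff)
      qed
      thus ?thesis by simp
    next
      case False
      have "D' = sw a b D"
      proof (intro ext)
        fix i j show "D' i j = sw a b D i j"
          using False r1 ag[of i j] assms(2) unfolding sw_def
          by (cases "{i,j} = {a,b}") (auto simp: doubleton_eq_iff)
      qed
      thus ?thesis by simp
    qed
  qed
  have DE: "D \<in> E" using assms(1) E by auto
  have ne: "D \<noteq> sw a b D"
  proof
    assume "D = sw a b D" hence "D a b = sw a b D a b" by simp
    thus False unfolding sw_def by simp
  qed
  have swE: "bflip (sw a b D) \<Longrightarrow> sw a b D \<in> E" using E unfolding sw_def
    by (auto simp: doubleton_eq_iff)
  show ?thesis
  proof
    assume c: "card E = 1"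
    show "\<not> bflip (sw a b D)"
    proof
      assume "bflip (sw a b D)"
      hence "{D, sw a b D} \<subseteq> E" using DE swE by auto
      hence "card {D, sw a b D} \<le> card E" using card_mono[of E] sub finite_subset by (metis finite.emptyI finite.insertI)
      thus False using c ne by simp
    qed
  next
    assume "\<not> bflip (sw a b D)"
    hence "E = {D}" using sub DE E by auto
    thus "card E = 1" by simp
  qed
qed

lemma forced_iff: "bflip D \<Longrightarrow> forced D \<longleftrightarrow> \<not> bflip (sw 1 3 D)"
  unfolding forced_def enhancements_def by (rule enh_gen) auto
lemma inv_forced_iff: "bflip D \<Longrightarrow> inv_forced D \<longleftrightarrow> \<not> bflip (sw 0 2 D)"
  unfolding inv_forced_def inv_enhancements_def by (rule enh_gen) auto
lemma tourn_sw: assumes "tournament4 D" "a \<noteq> b" shows "tournament4 (sw a b D)"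
  unfolding tournament4_def
proof (intro conjI allI impI)
  fix i assume "i < (4::nat)"
  hence "\<not> D i i" using assms unfolding tournament4_def by blast
  thus "\<not> sw a b D i i" using assms(2) unfolding sw_def by auto
next
  fix i j assume h: "i < (4::nat)" "j < 4" "i \<noteq> j"
  hence "D i j = (\<not> D j i)" using assms unfolding tournament4_def by blast
  thus "sw a b D i j = (\<not> sw a b D j i)" unfolding sw_def by auto
qed

lemma sliding_iff:
  assumes "bflip D" shows "sliding D \<longleftrightarrow> \<not> NS D"
proof -
  have tD: "tournament4 D" using assms unfolding bflip_def by simp
  have b1: "bflip (sw 1 3 D) \<longleftrightarrow> acyclic_tri (sw 1 3 D) 0 1 2 \<and> acyclic_tri (sw 1 3 D) 0 2 3 \<and> acyclic_tri (sw 1 3 D) 0 1 3 \<and> acyclic_tri (sw 1 3 D) 1 2 3"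
    unfolding bflip_def using tourn_sw[OF tD, of 1 3] by simp
  have b2: "bflip (sw 0 2 D) \<longleftrightarrow> acyclic_tri (sw 0 2 D) 0 1 2 \<and> acyclic_tri (sw 0 2 D) 0 2 3 \<and> acyclic_tri (sw 0 2 D) 0 1 3 \<and> acyclic_tri (sw 0 2 D) 1 2 3"
    unfolding bflip_def using tourn_sw[OF tD, of 0 2] by simp
  show ?thesis
    unfolding sliding_def forced_iff[OF assms] inv_forced_iff[OF assms] b1 b2
    using acyc[OF assms] tourn[OF assms] unfolding acyclic_tri_def NS_def sw_def
    by (cases "D 0 1"; cases "D 0 2"; cases "D 0 3"; cases "D 1 2"; cases "D 1 3"; cases "D 2 3"; simp)
qed

lemma sides_mem: "(x::nat) < y \<Longrightarrow> y < 3 \<Longrightarrow> (x,y) \<in> Sides"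
proof -
  assume "x < y" "y < 3"
  hence "(x=0 \<and> y=1) \<or> (x=0 \<and> y=2) \<or> (x=1 \<and> y=2)" by arith
  thus ?thesis unfolding Sides_def by auto
qed

lemma card_split:
  assumes "finite F" "x1 \<in> F" "x2 \<in> F" "x1 \<noteq> x2"
  shows "card {t \<in> F. P t} = card {t \<in> F - {x1,x2}. P t} + of_bool (P x1) + of_bool (P x2)"
proof -
  have e: "{t \<in> F. P t} = {t \<in> F - {x1,x2}. P t} \<union> ((if P x1 then {x1} else {}) \<union> (if P x2 then {x2} else {}))"
    using assms by auto
  have "card {t \<in> F. P t} = card {t \<in> F - {x1,x2}. P t} + card ((if P x1 then {x1} else {}) \<union> (if P x2 then {x2} else {}))"
    unfolding e by (rule card_Un_disjoint) (use assms in auto)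
  also have "card ((if P x1 then {x1} else {}) \<union> (if P x2 then {x2} else {})) = of_bool (P x1) + of_bool (P x2)"
    using assms(4) by (cases "P x1"; cases "P x2"; simp)
  finally show ?thesis by simp
qed

definition T0 :: "(nat, nat) btri" where
  "T0 = ({0,1}, \<lambda>(t,s). (1 - t, s), \<lambda>t c. c)"

lemma T0_corner:
  assumes "t \<in> {0,1::nat}" "c < (3::nat)"
  shows "((t,c),(1-t,c)) \<in> corner_adj {0,1} (\<lambda>(t,s). (1 - t, s))"
proof -
  have "c = 0 \<or> c = 1 \<or> c = 2" using assms(2) by arith
  moreover have "(0::nat,1::nat) \<in> Sides" "(0::nat,2::nat) \<in> Sides" unfolding Sides_def by auto
  ultimately show ?thesis unfolding corner_adj_def using assms(1)
    by (elim disjE) (fastforce)+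
qed

lemma T0_bt: "branched_triangulation T0"
proof -
  have s01: "(0::nat,1::nat) \<in> Sides" unfolding Sides_def by auto
  have c: "\<forall>t\<in>{0,1::nat}. \<forall>t'\<in>{0,1::nat}. \<forall>c<3. \<forall>c'<(3::nat). c = c' \<longrightarrow>
        ((t,c),(t',c')) \<in> (corner_adj {0,1} (\<lambda>(t,s). (1 - t, s)))\<^sup>*"
  proof (intro ballI allI impI)
    fix t t' c c' assume h: "t \<in> {0,1::nat}" "t' \<in> {0,1::nat}" "c < (3::nat)" "c' < (3::nat)" "c = c'"
    show "((t,c),(t',c')) \<in> (corner_adj {0,1} (\<lambda>(t,s). (1 - t, s)))\<^sup>*"
    proof (cases "t = t'")
      case True thus ?thesis using h by simp
    next
      case False hence "t' = 1 - t" using h by auto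
      thus ?thesis using T0_corner[OF h(1,3)] h(5) by auto
    qed
  qed
  have d: "\<forall>t\<in>{0,1::nat}. \<forall>t'\<in>{0,1::nat}. (t,t') \<in> (dual_adj {0,1} (\<lambda>(t,s). (1 - t, s)))\<^sup>*"
  proof (intro ballI)
    fix t t' assume h: "t \<in> {0,1::nat}" "t' \<in> {0,1::nat}"
    show "(t,t') \<in> (dual_adj {0,1} (\<lambda>(t,s). (1 - t, s)))\<^sup>*"
    proof (cases "t = t'")
      case True thus ?thesis by simp
    next
      case False hence "t' = 1 - t" using h by auto
      moreover have "(t, 1 - t) \<in> dual_adj {0,1} (\<lambda>(t,s). (1 - t, s))"
        unfolding dual_adj_def using h(1) s01 by fastforce
      ultimately show ?thesis by auto
    qed
  qed
  have a: "\<forall>t\<in>{0,1::nat}. \<forall>s\<in>Sides. (\<lambda>(t,s). (1 - t, s)) (t,s) \<in> {0,1} \<times> Sides \<and>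
      (\<lambda>(t,s). (1 - t, s)) ((\<lambda>(t,s). (1 - t, s)) (t,s)) = (t,s) \<and> (\<lambda>(t,s). (1 - t, s)) (t,s) \<noteq> (t,s)"
    by auto
  show ?thesis unfolding branched_triangulation_def T0_def using a c d by simp
qed

theorem proposition2p1:
  assumes "bflip D"
  shows "sliding D \<longleftrightarrow>
    (\<forall>(T :: (nat, nat) btri) x1 x2.
       branched_triangulation T \<and> flip_applicable D T x1 x2 \<longrightarrow>
       (\<forall>v \<in> tri_vertices T. d_b T v = d_b (apply_flip D T x1 x2) v))"
proof
  assume "sliding D"
  hence nNS: "\<not> NS D" using sliding_iff[OF assms] by simp
  show "\<forall>(T :: (nat, nat) btri) x1 x2.
       branched_triangulation T \<and> flip_applicable D T x1 x2 \<longrightarrow>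
       (\<forall>v \<in> tri_vertices T. d_b T v = d_b (apply_flip D T x1 x2) v)"
  proof (intro allI impI)
    fix T :: "(nat,nat) btri" and x1 x2
    assume h: "branched_triangulation T \<and> flip_applicable D T x1 x2"
    obtain F gl vert where T: "T = (F, gl, vert)" by (cases T)
    have fin: "finite F" and cons: "\<forall>t\<in>F. \<forall>s\<in>Sides.
        vert t (fst s) = vert (fst (gl (t,s))) (fst (snd (gl (t,s)))) \<and>
        vert t (snd s) = vert (fst (gl (t,s))) (snd (snd (gl (t,s))))"
      using h unfolding T branched_triangulation_def by auto
    have x: "x1 \<in> F" "x2 \<in> F" "x1 \<noteq> x2" and g: "gl (x1, side_of D Q1 0 2) = (x2, side_of D Q2 0 2)"
      using h unfolding T flip_applicable_def by auto
    note R = ranks_Q1[OF assms]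
    have sS: "side_of D Q1 0 2 \<in> Sides"
      using R sides_mem unfolding side_of_def by (cases "D 0 2") (auto simp: min_def max_def)
    have cg: "vert x1 (fst (side_of D Q1 0 2)) = vert x2 (fst (side_of D Q2 0 2)) \<and>
              vert x1 (snd (side_of D Q1 0 2)) = vert x2 (snd (side_of D Q2 0 2))"
      using cons x(1) sS g by force
    have glue: "vert x1 (rank D Q1 0) = vert x2 (rank D Q2 0) \<and> vert x1 (rank D Q1 2) = vert x2 (rank D Q2 2)"
      using cg R unfolding side_of_def by (cases "D 0 2") (auto simp: min_def max_def)
    define qv where "qv = quad_vert D x1 x2 vert"
    note TM = the_mids[OF assms] and RM = rank_mids[OF assms]
    have h1: "flip_vert D x1 x2 vert x1 1 = qv (midf D 0 1 3)"
      unfolding flip_vert_def qv_def TM by simp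
    have h2: "flip_vert D x1 x2 vert x2 1 = qv (midf D 1 2 3)"
      unfolding flip_vert_def qv_def TM using x(3) by simp
    have h3: "\<And>t. t \<noteq> x1 \<Longrightarrow> t \<noteq> x2 \<Longrightarrow> flip_vert D x1 x2 vert t 1 = vert t 1"
      unfolding flip_vert_def by simp
    have g1: "vert x1 1 = qv (midf D 0 1 2)"
      unfolding qv_def quad_vert_def using RM by simp
    have g2: "vert x2 1 = qv (midf D 0 2 3)"
    proof (cases "midf D 0 2 3 \<in> Q1")
      case True
      hence "midf D 0 2 3 = 0 \<or> midf D 0 2 3 = 2" using RM(4) unfolding Q1_def Q2_def by auto
      thus ?thesis unfolding qv_def quad_vert_def using True glue RM by auto
    next
      case False thus ?thesis unfolding qv_def quad_vert_def using RM by simp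
    qed
    have key: "\<And>v. card {t \<in> F. vert t 1 = v} = card {t \<in> F. flip_vert D x1 x2 vert t 1 = v}"
    proof -
      fix v
      have e: "{t \<in> F - {x1,x2}. vert t 1 = v} = {t \<in> F - {x1,x2}. flip_vert D x1 x2 vert t 1 = v}"
        using h3 by auto
      show "card {t \<in> F. vert t 1 = v} = card {t \<in> F. flip_vert D x1 x2 vert t 1 = v}"
        unfolding card_split[OF fin x, of "\<lambda>t. vert t 1 = v"] card_split[OF fin x, of "\<lambda>t. flip_vert D x1 x2 vert t 1 = v"]
          e h1 h2 g1 g2
        using mids[OF assms nNS] by auto
    qed
    show "\<forall>v \<in> tri_vertices T. d_b T v = d_b (apply_flip D T x1 x2) v"
      unfolding T d_b_def apply_flip_def using key by simp
  qed
next
  assume H: "\<forall>(T :: (nat, nat) btri) x1 x2.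
       branched_triangulation T \<and> flip_applicable D T x1 x2 \<longrightarrow>
       (\<forall>v \<in> tri_vertices T. d_b T v = d_b (apply_flip D T x1 x2) v)"
  show "sliding D"
  proof (rule ccontr)
    assume "\<not> sliding D"
    hence ns: "NS D" using sliding_iff[OF assms] by simp
    note NF = ns_facts[OF assms ns]
    have fa: "flip_applicable D T0 0 1"
      unfolding flip_applicable_def T0_def side_of_def using NF by simp
    have vt: "(1::nat) \<in> tri_vertices T0" unfolding tri_vertices_def T0_def by auto
    have "d_b T0 1 = d_b (apply_flip D T0 0 1) 1" using H T0_bt fa vt by blast
    moreover have "d_b T0 1 = 1"
    proof -
      have "{t::nat. t = 0 \<or> t = Suc 0} = {0, Suc 0}" by auto
      hence "card {t::nat. t = 0 \<or> t = Suc 0} = 2" by simp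
      thus ?thesis unfolding d_b_def T0_def by simp
    qed
    moreover have "d_b (apply_flip D T0 0 1) 1 = 0"
    proof -
      have "{t \<in> {0,1::nat}. flip_vert D 0 1 (\<lambda>t c. c) t 1 = 1} = {}"
        using NF unfolding flip_vert_def the_mids[OF assms] quad_vert_def by auto
      thus ?thesis unfolding d_b_def apply_flip_def T0_def by simp
    qed
    ultimately show False by simp
  qed
qed

end
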